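(* Let $\mathfrak{g}$ be a real Lie algebra with a complex structure $J$ and a $J$-compatible inner product $g$, and let $c\in\Lambda^3\mathfrak{g}^*$ be defined by $$c(X,Y,Z)=-g([JX,JY],Z)-g([JY,JZ],X)-g([JZ,JX],Y).$$ Let $\xi$ be the center of $\mathfrak{g}$ and $X\in\xi$. Then for every $Y\in\mathfrak{g}$, $$dc(X,Y,JX,JY)=2\Big(\|[Y,JX]\|^2-g([[JX,Y],JX],Y)-g([[Y,JY],JX],X)\Big).$$
   Context: A complex structure on $\mathfrak{g}$ is $J$ with $J^2=-\mathrm{Id}$ and $[X,Y]-[JX,JY]+J[JX,Y]+J[X,JY]=0$. $g$ is $J$-compatible if $g(JX,JY)=g(X,Y)$. The form $c$ is the torsion $3$-form of the Bismut connection of $(J,g)$. The differential $d$ is the Chevalley–Eilenberg differential: for $\alpha\in\Lambda^k\mathfrak{g}^*$, $d\alpha(X_0,\dots,X_k)=\sum_{i<j}(-1)^{i+j}\alpha([X_i,X_j],X_0,\dots,\hat X_i,\dots,\hat X_j,\dots,X_k)$. $\|\cdot\|$ is the norm induced by $g$. *)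

theory Defs
  imports "HOL-Analysis.Analysis"
begin

definition lie_algebra :: "('a::real_vector \<Rightarrow> 'a \<Rightarrow> 'a) \<Rightarrow> bool" where
  "lie_algebra br \<longleftrightarrow> bilinear br \<and> (\<forall>x. br x x = 0) \<and>
     (\<forall>x y z. br x (br y z) + br y (br z x) + br z (br x y) = 0)"

definition complex_structure :: "('a::real_vector \<Rightarrow> 'a \<Rightarrow> 'a) \<Rightarrow> ('a \<Rightarrow> 'a) \<Rightarrow> bool" where
  "complex_structure br J \<longleftrightarrow> linear J \<and> (\<forall>x. J (J x) = - x) \<and>
     (\<forall>x y. br x y - br (J x) (J y) + J (br (J x) y) + J (br x (J y)) = 0)"

definition inner_product :: "('a::real_vector \<Rightarrow> 'a \<Rightarrow> real) \<Rightarrow> bool" where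
  "inner_product g \<longleftrightarrow> bilinear g \<and> (\<forall>x y. g x y = g y x) \<and> (\<forall>x. x \<noteq> 0 \<longrightarrow> g x x > 0)"

definition J_compatible :: "('a \<Rightarrow> 'a \<Rightarrow> real) \<Rightarrow> ('a \<Rightarrow> 'a) \<Rightarrow> bool" where
  "J_compatible g J \<longleftrightarrow> (\<forall>x y. g (J x) (J y) = g x y)"

definition gnorm :: "('a \<Rightarrow> 'a \<Rightarrow> real) \<Rightarrow> 'a \<Rightarrow> real" where
  "gnorm g x = sqrt (g x x)"

definition lie_center :: "('a::real_vector \<Rightarrow> 'a \<Rightarrow> 'a) \<Rightarrow> 'a set" where
  "lie_center br = {x. \<forall>y. br x y = 0}"

text \<open>k-forms are represented as functions on lists of k vectors. Chevalley--Eilenberg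
  differential: (d alpha)(X_0..X_k) = sum_{i<j} (-1)^(i+j) alpha([X_i,X_j], X_0,..^i..^j..,X_k).\<close>
definition ce_d :: "('a \<Rightarrow> 'a \<Rightarrow> 'a) \<Rightarrow> ('a list \<Rightarrow> real) \<Rightarrow> 'a list \<Rightarrow> real" where
  "ce_d br \<alpha> xs = (\<Sum>j<length xs. \<Sum>i<j. (-1) ^ (i + j) *
      \<alpha> (br (xs ! i) (xs ! j) # map (nth xs) (filter (\<lambda>k. k \<noteq> i \<and> k \<noteq> j) [0..<length xs])))"

definition c_form :: "('a \<Rightarrow> 'a \<Rightarrow> 'a) \<Rightarrow> ('a \<Rightarrow> 'a) \<Rightarrow> ('a \<Rightarrow> 'a \<Rightarrow> real) \<Rightarrow> 'a list \<Rightarrow> real" where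
  "c_form br J g xs = (let X = xs ! 0; Y = xs ! 1; Z = xs ! 2 in
      - g (br (J X) (J Y)) Z - g (br (J Y) (J Z)) X - g (br (J Z) (J X)) Y)"

end

theory Submission
  imports Defs
begin

lemma ce_d4: "ce_d br \<alpha> [a,b,c,d] =
  - \<alpha> [br a b, c, d] + \<alpha> [br a c, b, d] - \<alpha> [br a d, b, c]
  - \<alpha> [br b c, a, d] + \<alpha> [br b d, a, c] - \<alpha> [br c d, a, b]"
  unfolding ce_d_def by (simp add: lessThan_Suc upt_rec numeral_eq_Suc)

theorem lemma3p4:
  fixes br :: "'a::euclidean_space \<Rightarrow> 'a \<Rightarrow> 'a"
    and J :: "'a \<Rightarrow> 'a"
    and g :: "'a \<Rightarrow> 'a \<Rightarrow> real"
    and X Y :: 'a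
  assumes "lie_algebra br"
    and "complex_structure br J"
    and "inner_product g"
    and "J_compatible g J"
    and "X \<in> lie_center br"
  shows "ce_d br (c_form br J g) [X, Y, J X, J Y] =
    2 * ((gnorm g (br Y (J X)))\<^sup>2 - g (br (br (J X) Y) (J X)) Y - g (br (br Y (J Y)) (J X)) X)"
proof -
  have bb: "bilinear br" and jac: "\<And>x y z. br x (br y z) + br y (br z x) + br z (br x y) = 0"
    and alt: "\<And>x. br x x = 0"
    using assms(1) unfolding lie_algebra_def by auto
  have lJ: "linear J" and JJ[simp]: "\<And>x. J (J x) = - x"
    and nij: "\<And>x y. br x y - br (J x) (J y) + J (br (J x) y) + J (br x (J y)) = 0"
    using assms(2) unfolding complex_structure_def by auto
  have bg: "bilinear g" and gsym: "\<And>x y. g x y = g y x"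
    using assms(3) unfolding inner_product_def by auto
  have gJ[simp]: "\<And>x y. g (J x) (J y) = g x y" using assms(4) unfolding J_compatible_def by auto
  have cen[simp]: "\<And>y. br X y = 0" using assms(5) unfolding lie_center_def by auto
  have [simp]: "\<And>y. br 0 y = 0" "\<And>y. br y 0 = 0" "\<And>a b. br (-a) b = - br a b" "\<And>a b. br a (-b) = - br a b"
    using bb by (auto simp: bilinear_lzero bilinear_rzero bilinear_lneg bilinear_rneg)
  have badd: "\<And>a b c. br (a+b) c = br a c + br b c" "\<And>a b c. br c (a+b) = br c a + br c b"
    using bb by (auto simp: bilinear_ladd bilinear_radd)
  have anti: "\<And>a b. br b a = - br a b"
  proof -
    fix a b
    have "br a b + br b a = 0" 
    proof -
      have "0 = br (a+b) (a+b)" using alt by simp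
      also have "\<dots> = br a a + br a b + (br b a + br b b)" by (simp only: badd add_ac)
      also have "\<dots> = br a b + br b a" by (simp add: alt)
      finally show ?thesis by simp
    qed
    thus "br b a = - br a b" by (simp add: eq_neg_iff_add_eq_0 add.commute)
  qed
  have [simp]: "\<And>y. br y X = 0" using anti cen by (metis neg_equal_0_iff_equal)
  have [simp]: "\<And>y. g 0 y = 0" "\<And>y. g y 0 = 0" "\<And>a b. g (-a) b = - g a b" "\<And>a b. g a (-b) = - g a b"
    using bg by (auto simp: bilinear_lzero bilinear_rzero bilinear_lneg bilinear_rneg)
  have gadd: "\<And>a b c. g (a+b) c = g a c + g b c"
    using bg by (auto simp: bilinear_ladd)
  have [simp]: "J 0 = 0" "\<And>x. J (-x) = - J x" using lJ by (auto simp: linear_0 linear_neg)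
  have cJ: "\<And>W. br (J X) (J W) = J (br (J X) W)"
    using nij[of X] by simp
  define A where "A = br Y (J X)"
  define B where "B = br Y (J Y)"
  define C where "C = br (J X) (J Y)"
  have e1: "C = - J A" unfolding C_def A_def cJ by (subst anti) simp
  have dc: "ce_d br (c_form br J g) [X, Y, J X, J Y] =
     - c_form br J g [A, X, J Y] + c_form br J g [B, X, J X] - c_form br J g [C, X, Y]"
    unfolding ce_d4 A_def B_def C_def by (simp add: c_form_def)
  have c1: "c_form br J g [A, X, J Y] = - g (br (J A) (J X)) (J Y) + g (br (J X) Y) A + g (br Y (J A)) X"
    by (simp add: c_form_def)
  have c2: "c_form br J g [B, X, J X] = - g (br (J B) (J X)) (J X)"
    by (simp add: c_form_def)
  have c3: "c_form br J g [C, X, Y] = - g (br (J C) (J X)) Y - g C C - g (br (J Y) (J C)) X"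
    by (simp add: c_form_def Let_def C_def)
  have JC: "J C = A" using e1 by simp
  have gCC: "g C C = g A A" using e1 by simp
  have f1: "g (br (J A) (J X)) (J Y) = g (br A (J X)) Y"
  proof -
    have "br (J A) (J X) = J (br A (J X))"
      apply (subst anti) apply (simp add: cJ) apply (subst anti) apply simp done
    thus ?thesis by simp
  qed
  have f2: "g (br (J X) Y) A = - g A A" unfolding A_def by (subst anti) simp
  have f3: "g (br (J B) (J X)) (J X) = g (br B (J X)) X"
  proof -
    have "br (J B) (J X) = J (br B (J X))"
      apply (subst anti) apply (simp add: cJ) apply (subst anti) apply simp done
    thus ?thesis by simp
  qed
  have jac1: "br Y C + br (J X) (br (J Y) Y) + br (J Y) (br Y (J X)) = 0"
    unfolding C_def by (rule jac)
  have "br (J X) (br (J Y) Y) = br B (J X)"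
    unfolding B_def by (subst anti[of Y], simp, subst anti, simp)
  with jac1 have "br Y C + br B (J X) + br (J Y) A = 0" unfolding A_def by simp
  moreover have "br Y C = - br Y (J A)" using e1 by simp
  ultimately have z: "- br Y (J A) + br B (J X) + br (J Y) A = 0" by simp
  have "br B (J X) = (- br Y (J A) + br B (J X) + br (J Y) A) + br Y (J A) - br (J Y) A"
    by (simp add: algebra_simps)
  hence "br B (J X) = br Y (J A) - br (J Y) A" unfolding z by simp
  hence f4: "g (br B (J X)) X = g (br Y (J A)) X - g (br (J Y) A) X"
    using gadd[of "br Y (J A)" "- br (J Y) A" X] by simp
  have gn: "(gnorm g A)\<^sup>2 = g A A"
  proof -
    have "g A A \<ge> 0" using assms(3) unfolding inner_product_def
      by (cases "A = 0") (auto simp: less_imp_le)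
    thus ?thesis unfolding gnorm_def by simp
  qed
  have f5: "br (br (J X) Y) (J X) = - br A (J X)" unfolding A_def by (subst anti[of Y]) simp
  show ?thesis unfolding dc c1 c2 c3 JC gCC f1 f2 f3 f5 A_def[symmetric] B_def[symmetric] gn
    using f4 by simp
qed

end
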